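(* Let $\vec{\alpha}=\langle\alpha_s:s\in[\mathbb{N}]^{<\infty}\rangle$ be a sequence of nonstandard hypernatural numbers. The collection of $\vec{\alpha}$-Ramsey null subsets of $[\mathbb{N}]^\infty$ is a $\sigma$-ideal: it contains $\emptyset$, is closed under subsets, and is closed under countable unions.
   Context: Setting (Alpha-Theory of Benci–Di Nasso): ZFC together with a new symbol $\alpha$ satisfying: ($\alpha$1) every sequence $\varphi=\langle\varphi_i:i\in\mathbb{N}\rangle$ has a unique ideal value $\varphi[\alpha]$; ($\alpha$2) if $\varphi[\alpha]=\psi[\alpha]$ and $f\circ\varphi$, $f\circ\psi$ make sense then $(f\circ\varphi)[\alpha]=(f\circ\psi)[\alpha]$; ($\alpha$3) constant real sequences $r$ have ideal value $r$, and $\langle i\rangle$ has ideal value $\alpha\notin\mathbb{N}$; ($\alpha$4) if $\vartheta_i=\{\varphi_i,\psi_i\}$ then $\vartheta[\alpha]=\{\varphi[\alpha],\psi[\alpha]\}$; ($\alpha$5) the constant sequence $\emptyset$ has ideal value $\emptyset$, and for nonempty $\psi_i$, $\psi[\alpha]=\{\vartheta[\alpha]:\vartheta_i\in\psi_i\ \forall i\}$. ${}^*A$ is the ideal value of the constant sequence $A$; elements of ${}^*\mathbb{N}\setminus\mathbb{N}$ are nonstandard hypernatural numbers. For finite $s$, $s\sqsubseteq X$ means $s=\{j\in X:j\le i\}$ for some $i$. A tree on $\mathbb{N}$ is a nonempty $T\subseteq[\mathbb{N}]^{<\infty}$ closed under $\sqsubseteq$-initial segments; $[T]=\{X\in[\mathbb{N}]^\infty:$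 every finite $s\sqsubseteq X$ is in $T\}$; stem $st(T)$ = $\sqsubseteq$-maximal $s\in T$ comparable with all elements of $T$; $T/s=\{t\in T:s\sqsubseteq t\}$. An $\vec{\alpha}$-tree is a tree $T$ with a stem, $T/st(T)\neq\emptyset$, and $s\cup\{\alpha_s\}\in{}^*T$ for all $s\in T/st(T)$. $\mathcal{X}\subseteq[\mathbb{N}]^\infty$ is $\vec{\alpha}$-Ramsey null if for every $\vec{\alpha}$-tree $T$ there is an $\vec{\alpha}$-tree $S\subseteq T$ with $st(S)=st(T)$ and $[S]\cap\mathcal{X}=\emptyset$. *)

theory Defs
  imports Main
begin

text \<open>Ultrapower model of Alpha-Theory: the ideal value map corresponds to a
nonprincipal ultrafilter U on nat (U = {A. alpha in *A}); every hypernatural is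
the ideal value of some sequence g :: nat => nat, and transfer statements about
ideal values hold iff they hold for U-almost every index.\<close>

definition ultrafilter_on_nat :: "nat set set \<Rightarrow> bool" where
  "ultrafilter_on_nat U \<longleftrightarrow>
     UNIV \<in> U \<and> {} \<notin> U \<and>
     (\<forall>A B. A \<in> U \<longrightarrow> A \<subseteq> B \<longrightarrow> B \<in> U) \<and>
     (\<forall>A B. A \<in> U \<longrightarrow> B \<in> U \<longrightarrow> A \<inter> B \<in> U) \<and>
     (\<forall>A. A \<in> U \<or> - A \<in> U)"

definition nonprincipal :: "nat set set \<Rightarrow> bool" where
  "nonprincipal U \<longleftrightarrow> (\<forall>A. finite A \<longrightarrow> A \<notin> U)"

text \<open>The hypernatural represented by g is nonstandard iff it differs from every
standard n, i.e. g i \<noteq> n for U-almost all i.\<close>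
definition nonstandard_rep :: "nat set set \<Rightarrow> (nat \<Rightarrow> nat) \<Rightarrow> bool" where
  "nonstandard_rep U g \<longleftrightarrow> (\<forall>n. {i. g i \<noteq> n} \<in> U)"

definition init_seg :: "nat set \<Rightarrow> nat set \<Rightarrow> bool" where
  "init_seg s X \<longleftrightarrow> finite s \<and> (\<exists>n. s = {j \<in> X. j < n})"

definition is_tree :: "nat set set \<Rightarrow> bool" where
  "is_tree T \<longleftrightarrow> T \<noteq> {} \<and> (\<forall>t\<in>T. finite t) \<and>
     (\<forall>t\<in>T. \<forall>s. init_seg s t \<longrightarrow> s \<in> T)"

definition branches :: "nat set set \<Rightarrow> nat set set" where
  "branches T = {X. infinite X \<and> (\<forall>s. init_seg s X \<longrightarrow> s \<in> T)}"

definition comparable :: "nat set \<Rightarrow> nat set \<Rightarrow> bool" where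
  "comparable s t \<longleftrightarrow> init_seg s t \<or> init_seg t s"

definition is_stem :: "nat set set \<Rightarrow> nat set \<Rightarrow> bool" where
  "is_stem T s \<longleftrightarrow> s \<in> T \<and> (\<forall>t\<in>T. comparable s t) \<and>
     (\<forall>s'\<in>T. (\<forall>t\<in>T. comparable s' t) \<longrightarrow> init_seg s s' \<longrightarrow> s' = s)"

definition stem :: "nat set set \<Rightarrow> nat set" where
  "stem T = (THE s. is_stem T s)"

definition tree_above :: "nat set set \<Rightarrow> nat set \<Rightarrow> nat set set" where
  "tree_above T s = {t \<in> T. init_seg s t}"

text \<open>alpha-tree, where alpha_s is the ideal value of the sequence a s:
  s \<union> {alpha_s} \<in> *T  iff  {i. s \<union> {a s i} \<in> T} \<in> U.\<close>
definition alpha_tree :: "nat set set \<Rightarrow> (nat set \<Rightarrow> nat \<Rightarrow> nat) \<Rightarrow> nat set set \<Rightarrow> bool" where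
  "alpha_tree U a T \<longleftrightarrow> is_tree T \<and> (\<exists>s. is_stem T s) \<and>
     tree_above T (stem T) \<noteq> {} \<and>
     (\<forall>s\<in>tree_above T (stem T). {i. insert (a s i) s \<in> T} \<in> U)"

definition alpha_ramsey_null ::
  "nat set set \<Rightarrow> (nat set \<Rightarrow> nat \<Rightarrow> nat) \<Rightarrow> nat set set \<Rightarrow> bool" where
  "alpha_ramsey_null U a \<X> \<longleftrightarrow> (\<forall>X\<in>\<X>. infinite X) \<and>
     (\<forall>T. alpha_tree U a T \<longrightarrow>
        (\<exists>S. alpha_tree U a S \<and> S \<subseteq> T \<and> stem S = stem T \<and>
             branches S \<inter> \<X> = {}))"

end

theory Submission
  imports Defs
begin
lemma iseg_iff: "init_seg s t \<longleftrightarrow> finite s \<and> s \<subseteq> t \<and> (\<forall>x\<in>s. \<forall>y\<in>t. y < x \<longrightarrow> y \<in> s)"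
proof
  assume "init_seg s t" then show "finite s \<and> s \<subseteq> t \<and> (\<forall>x\<in>s. \<forall>y\<in>t. y < x \<longrightarrow> y \<in> s)"
    unfolding init_seg_def by auto
next
  assume h: "finite s \<and> s \<subseteq> t \<and> (\<forall>x\<in>s. \<forall>y\<in>t. y < x \<longrightarrow> y \<in> s)"
  show "init_seg s t"
  proof (cases "s = {}")
    case True then show ?thesis unfolding init_seg_def by auto
  next
    case False
    have "s = {j\<in>t. j < Suc (Max s)}"
    proof
      show "s \<subseteq> {j\<in>t. j < Suc (Max s)}" using h by (auto simp: less_Suc_eq_le)
      show "{j\<in>t. j < Suc (Max s)} \<subseteq> s"
      proof
        fix j assume j: "j \<in> {j\<in>t. j < Suc (Max s)}"
        have M: "Max s \<in> s" using h False by auto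
        show "j \<in> s"
        proof (cases "j = Max s")
          case True then show ?thesis using M by simp
        next
          case False then have "j < Max s" using j by auto
          then show ?thesis using h M j by blast
        qed
      qed
    qed
    then show ?thesis using h unfolding init_seg_def by blast
  qed
qed

lemma iseg_trans: "init_seg s t \<Longrightarrow> init_seg t u \<Longrightarrow> init_seg s u"
  unfolding iseg_iff by blast

lemma iseg_comp: "init_seg s X \<Longrightarrow> init_seg t X \<Longrightarrow> init_seg s t \<or> init_seg t s"
proof -
  assume a1: "init_seg s X" and a2: "init_seg t X"
  then obtain n m where n: "s = {j\<in>X. j<n}" and m: "t = {j\<in>X. j<m}" and f: "finite s" "finite t"
    unfolding init_seg_def by blast
  show ?thesis
  proof (cases "n \<le> m")
    case True
    then have "s = {j\<in>t. j<n}" using n m by auto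
    then show ?thesis using f unfolding init_seg_def by blast
  next
    case False
    then have "t = {j\<in>s. j<m}" using n m by auto
    then show ?thesis using f unfolding init_seg_def by blast
  qed
qed

lemma iseg_refl: "finite s \<Longrightarrow> init_seg s s" unfolding iseg_iff by blast
lemma iseg_empty: "init_seg {} X" unfolding iseg_iff by blast
lemma iseg_finite: "init_seg s t \<Longrightarrow> finite s" unfolding iseg_iff by blast
lemma iseg_sub: "init_seg s t \<Longrightarrow> s \<subseteq> t" unfolding iseg_iff by blast
lemma iseg_card: "init_seg s t \<Longrightarrow> finite t \<Longrightarrow> card s \<le> card t"
  using iseg_sub card_mono by blast
lemma iseg_card_eq: "init_seg s t \<Longrightarrow> finite t \<Longrightarrow> card s = card t \<Longrightarrow> s = t"
  using iseg_sub[of s t] card_subset_eq[of t s] by simp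
lemma iseg_antisym: "init_seg s t \<Longrightarrow> init_seg t s \<Longrightarrow> s = t"
  using iseg_sub by blast

lemma iseg_insert:
  assumes "finite u" "\<forall>x\<in>u. x < m"
  shows "init_seg v (insert m u) \<longleftrightarrow> v = insert m u \<or> init_seg v u"
proof
  assume h: "init_seg v (insert m u)"
  show "v = insert m u \<or> init_seg v u"
  proof (cases "m \<in> v")
    case True
    then have "v = insert m u" using h assms unfolding iseg_iff by blast
    then show ?thesis by blast
  next
    case False
    then show ?thesis using h assms unfolding iseg_iff by blast
  qed
next
  assume "v = insert m u \<or> init_seg v u"
  then show "init_seg v (insert m u)"
  proof
    assume "v = insert m u" then show ?thesis using assms iseg_refl by simp
  next
    assume h: "init_seg v u"
    show ?thesis unfolding iseg_iff
    proof (intro conjI ballI impI)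
      show "finite v" using h iseg_finite by blast
      show "v \<subseteq> insert m u" using h iseg_sub by blast
    next
      fix x y
      assume xv: "x \<in> v" and yi: "y \<in> insert m u" and yx: "y < x"
      have "x \<in> u" using xv h iseg_sub by blast
      then have "y \<noteq> m" using yx assms by auto
      then have "y \<in> u" using yi by blast
      then show "y \<in> v" using h xv yx unfolding iseg_iff by blast
    qed
  qed
qed

lemma max_decomp:
  assumes "finite u" "u \<noteq> {}"
  shows "u = insert (Max u) (u - {Max u})" "\<forall>x\<in>u - {Max u}. x < Max u" "finite (u - {Max u})"
proof -
  show "u = insert (Max u) (u - {Max u})" using assms Max_in by blast
  show "\<forall>x\<in>u - {Max u}. x < Max u" using assms Max_ge order_le_less by auto
  show "finite (u - {Max u})" using assms by simp
qed

lemma iseg_remove_max: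
  assumes "init_seg r u" "r \<noteq> u" "finite u"
  shows "init_seg r (u - {Max u})"
proof -
  have ne: "u \<noteq> {}" using assms iseg_sub by blast
  have "init_seg r (insert (Max u) (u - {Max u}))" using assms max_decomp[OF assms(3) ne] by simp
  then show ?thesis using iseg_insert[OF max_decomp(3,2)[OF assms(3) ne]] assms max_decomp(1)[OF assms(3) ne] by auto
qed


lemma uf_int: "ultrafilter_on_nat U \<Longrightarrow> A \<in> U \<Longrightarrow> B \<in> U \<Longrightarrow> A \<inter> B \<in> U"
  unfolding ultrafilter_on_nat_def by blast
lemma uf_mono: "ultrafilter_on_nat U \<Longrightarrow> A \<in> U \<Longrightarrow> A \<subseteq> B \<Longrightarrow> B \<in> U"
  unfolding ultrafilter_on_nat_def by blast
lemma uf_ne: "ultrafilter_on_nat U \<Longrightarrow> A \<in> U \<Longrightarrow> \<exists>i. i \<in> A"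
  unfolding ultrafilter_on_nat_def by (metis ex_in_conv)

locale ctx =
  fixes U :: "nat set set" and a :: "nat set \<Rightarrow> nat \<Rightarrow> nat"
  assumes uf: "ultrafilter_on_nat U"
    and ns: "\<And>s. finite s \<Longrightarrow> nonstandard_rep U (a s)"
begin

lemma gt_large: "finite s \<Longrightarrow> {i. b < a s i} \<in> U"
proof (induction b)
  case 0
  have "{i. a s i \<noteq> 0} \<in> U" using ns[OF 0] unfolding nonstandard_rep_def by blast
  then show ?case by (simp add: gr0_conv_Suc not_gr_zero)
next
  case (Suc b)
  have "{i. a s i \<noteq> Suc b} \<in> U" using ns[OF Suc.prems] unfolding nonstandard_rep_def by blast
  then have "{i. b < a s i} \<inter> {i. a s i \<noteq> Suc b} \<in> U" using uf_int[OF uf] Suc by blast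
  moreover have "{i. b < a s i} \<inter> {i. a s i \<noteq> Suc b} = {i. Suc b < a s i}" by auto
  ultimately show ?case by simp
qed

lemma large_gt:
  assumes "finite s" "{i. insert (a s i) s \<in> A} \<in> U"
  shows "{i. insert (a s i) s \<in> A \<and> (\<forall>x\<in>s. x < a s i)} \<in> U"
proof -
  have "{i. sum id s < a s i} \<in> U" using gt_large assms by blast
  then have "{i. insert (a s i) s \<in> A} \<inter> {i. sum id s < a s i} \<in> U" using uf_int[OF uf] assms by blast
  moreover have "\<forall>x\<in>s. x \<le> sum id s" using assms(1) member_le_sum[of _ s id] by auto
  ultimately show ?thesis using uf_mono[OF uf] by (smt (verit) Int_iff le_less_trans mem_Collect_eq subsetI)
qed

lemma two_succ:
  assumes "finite s" "{i. insert (a s i) s \<in> A} \<in> U"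
  shows "\<exists>m1 m2. m1 \<noteq> m2 \<and> insert m1 s \<in> A \<and> insert m2 s \<in> A \<and> (\<forall>x\<in>s. x < m1) \<and> (\<forall>x\<in>s. x < m2)"
proof -
  let ?W = "{i. insert (a s i) s \<in> A \<and> (\<forall>x\<in>s. x < a s i)}"
  have W: "?W \<in> U" using large_gt assms by blast
  then obtain i where i: "i \<in> ?W" using uf_ne[OF uf] by blast
  have "{j. a s j \<noteq> a s i} \<in> U" using ns[OF assms(1)] unfolding nonstandard_rep_def by blast
  then have "?W \<inter> {j. a s j \<noteq> a s i} \<in> U" using uf_int[OF uf] W by blast
  then obtain j where j: "j \<in> ?W \<inter> {j. a s j \<noteq> a s i}" using uf_ne[OF uf] by blast
  show ?thesis using i j by (intro exI[of _ "a s i"] exI[of _ "a s j"]) auto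
qed

lemma stem_unique: "is_stem A r \<Longrightarrow> stem A = r"
  unfolding stem_def
proof (rule the_equality)
  fix s assume r: "is_stem A r" and s: "is_stem A s"
  have "comparable r s" using r s unfolding is_stem_def by blast
  then show "s = r" using r s unfolding is_stem_def comparable_def by metis
qed

lemma is_stem_intro:
  assumes T: "is_tree A" and r: "r \<in> A" and c: "\<forall>t\<in>A. comparable r t"
    and m: "m1 \<noteq> m2" "insert m1 r \<in> A" "insert m2 r \<in> A" "\<forall>x\<in>r. x < m1" "\<forall>x\<in>r. x < m2"
  shows "is_stem A r"
  unfolding is_stem_def
proof (intro conjI ballI impI)
  show "r \<in> A" by fact
  fix t assume "t \<in> A" then show "comparable r t" using c by blast
next
  fix s' assume s': "s' \<in> A" and cs: "\<forall>t\<in>A. comparable s' t" and rs: "init_seg r s'"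
  show "s' = r"
  proof (rule ccontr)
    assume ne: "s' \<noteq> r"
    have mem: "m \<in> s'" if "insert m r \<in> A" "\<forall>x\<in>r. x < m" for m
    proof -
      have "comparable s' (insert m r)" using cs that by blast
      then show ?thesis using ne rs that unfolding comparable_def iseg_iff by blast
    qed
    have m1: "m1 \<in> s'" and m2: "m2 \<in> s'" using mem m by auto
    have no: False if "mA \<noteq> mB" "mA < mB" "mA \<in> s'" "insert mB r \<in> A" "\<forall>x\<in>r. x < mA"  for mA mB
    proof -
      have "comparable s' (insert mB r)" using cs that by blast
      then show False using that unfolding comparable_def iseg_iff by blast
    qed
    show False
    proof (cases "m1 < m2")
      case True then show False using no[of m1 m2] m m1 by blast
    next
      case False then have "m2 < m1" using m by auto
      then show False using no[of m2 m1] m m2 by blast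
    qed
  qed
qed

lemma alpha_stem: "alpha_tree U a A \<Longrightarrow> is_stem A (stem A)"
  unfolding alpha_tree_def using stem_unique by blast

lemma tree_fin: "is_tree A \<Longrightarrow> t \<in> A \<Longrightarrow> finite t"
  unfolding is_tree_def by blast

lemma tree_closed: "is_tree A \<Longrightarrow> t \<in> A \<Longrightarrow> init_seg s t \<Longrightarrow> s \<in> A"
  unfolding is_tree_def by blast

end

context ctx begin

definition restr :: "nat set set \<Rightarrow> nat set \<Rightarrow> nat set set" where
  "restr A t = {u\<in>A. comparable u t}"

lemma succ_iseg: "finite s \<Longrightarrow> \<forall>x\<in>s. x < m \<Longrightarrow> init_seg s (insert m s)"
  using iseg_insert[of s m s] iseg_refl by blast

lemma restr_alpha:
  assumes A: "alpha_tree U a A" and t: "t \<in> tree_above A (stem A)"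
  shows "alpha_tree U a (restr A t) \<and> stem (restr A t) = t \<and> restr A t \<subseteq> A"
proof -
  have TA: "is_tree A" using A unfolding alpha_tree_def by blast
  have tA: "t \<in> A" and st: "init_seg (stem A) t" using t unfolding tree_above_def by auto
  have ft: "finite t" using tA TA tree_fin by blast
  have larget: "{i. insert (a t i) t \<in> A} \<in> U" using A t unfolding alpha_tree_def by blast
  obtain m1 m2 where m: "m1 \<noteq> m2" "insert m1 t \<in> A" "insert m2 t \<in> A" "\<forall>x\<in>t. x < m1" "\<forall>x\<in>t. x < m2"
    using two_succ[OF ft larget] by blast
  let ?R = "restr A t"
  have tR: "t \<in> ?R" unfolding restr_def comparable_def using tA iseg_refl ft by blast
  have TR: "is_tree ?R" unfolding is_tree_def
  proof (intro conjI ballI allI impI)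
    show "?R \<noteq> {}" using tR by blast
    fix u assume "u \<in> ?R" then show "finite u" using TA tree_fin unfolding restr_def by blast
  next
    fix u s assume u: "u \<in> ?R" and su: "init_seg s u"
    have "s \<in> A" using u su TA tree_closed unfolding restr_def by blast
    moreover have "comparable s t"
    proof -
      have "init_seg u t \<or> init_seg t u" using u unfolding restr_def comparable_def by blast
      then show ?thesis
      proof
        assume "init_seg u t" then show ?thesis using su iseg_trans unfolding comparable_def by blast
      next
        assume "init_seg t u" then show ?thesis using su iseg_comp unfolding comparable_def by blast
      qed
    qed
    ultimately show "s \<in> ?R" unfolding restr_def by blast
  qed
  have m1R: "insert m1 t \<in> ?R"
    using m(2) succ_iseg[OF ft m(4)] unfolding restr_def comparable_def by blast
  have m2R: "insert m2 t \<in> ?R"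
    using m(3) succ_iseg[OF ft m(5)] unfolding restr_def comparable_def by blast
  have cR: "\<forall>u\<in>?R. comparable t u" unfolding restr_def comparable_def by blast
  have stR: "is_stem ?R t" using is_stem_intro[OF TR tR cR m(1) m1R m2R m(4,5)] .
  then have stemR: "stem ?R = t" using stem_unique by blast
  have alpha: "\<forall>s\<in>tree_above ?R (stem ?R). {i. insert (a s i) s \<in> ?R} \<in> U"
  proof
    fix s assume s: "s \<in> tree_above ?R (stem ?R)"
    then have sA: "s \<in> A" and ts: "init_seg t s" using stemR unfolding tree_above_def restr_def by auto
    have fs: "finite s" using sA TA tree_fin by blast
    have "s \<in> tree_above A (stem A)" using sA ts st iseg_trans unfolding tree_above_def by blast
    then have "{i. insert (a s i) s \<in> A} \<in> U" using A unfolding alpha_tree_def by blast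
    then have L: "{i. insert (a s i) s \<in> A \<and> (\<forall>x\<in>s. x < a s i)} \<in> U" using large_gt fs by blast
    have "{i. insert (a s i) s \<in> A \<and> (\<forall>x\<in>s. x < a s i)} \<subseteq> {i. insert (a s i) s \<in> ?R}"
    proof
      fix i assume i: "i \<in> {i. insert (a s i) s \<in> A \<and> (\<forall>x\<in>s. x < a s i)}"
      then have "init_seg s (insert (a s i) s)" using succ_iseg fs by blast
      then have "init_seg t (insert (a s i) s)" using ts iseg_trans by blast
      then show "i \<in> {i. insert (a s i) s \<in> ?R}" using i unfolding restr_def comparable_def by blast
    qed
    then show "{i. insert (a s i) s \<in> ?R} \<in> U" by (rule uf_mono[OF uf L])
  qed
  have "t \<in> tree_above ?R t" unfolding tree_above_def using tR iseg_refl[OF ft] by blast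
  then have ne: "tree_above ?R (stem ?R) \<noteq> {}" unfolding stemR by blast
  have ex: "\<exists>s. is_stem ?R s" using stR by blast
  have alphaR: "alpha_tree U a ?R" unfolding alpha_tree_def by (intro conjI TR ex ne alpha)
  have sub: "?R \<subseteq> A" unfolding restr_def by blast
  show ?thesis using alphaR stemR sub by blast
qed

lemma null_choose:
  assumes N: "alpha_ramsey_null U a X" and A: "alpha_tree U a A" and t: "t \<in> tree_above A (stem A)"
  shows "\<exists>B. alpha_tree U a B \<and> B \<subseteq> A \<and> stem B = t \<and> branches B \<inter> X = {}"
proof -
  have R: "alpha_tree U a (restr A t)" "stem (restr A t) = t" "restr A t \<subseteq> A"
    using restr_alpha[OF A t] by auto
  have N2: "\<forall>T. alpha_tree U a T \<longrightarrow>
        (\<exists>S. alpha_tree U a S \<and> S \<subseteq> T \<and> stem S = stem T \<and> branches S \<inter> X = {})"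
    using N unfolding alpha_ramsey_null_def by (rule conjunct2)
  obtain B where "alpha_tree U a B" "B \<subseteq> restr A t" "stem B = stem (restr A t)" "branches B \<inter> X = {}"
    using N2[rule_format, OF R(1)] by blast
  then show ?thesis using R(2,3) by blast
qed

end

lemma iseg_max:
  assumes "finite u" "u \<noteq> {}"
  shows "init_seg v u \<longleftrightarrow> v = u \<or> init_seg v (u - {Max u})"
proof -
  define w where "w = u - {Max u}"
  have e: "insert (Max u) w = u" using max_decomp(1)[OF assms] unfolding w_def by simp
  have h: "init_seg v (insert (Max u) w) \<longleftrightarrow> v = insert (Max u) w \<or> init_seg v w"
    using iseg_insert[OF max_decomp(3,2)[OF assms], of v] unfolding w_def .
  show ?thesis using h[unfolded e] unfolding w_def .
qed

lemma iseg_exists: "infinite X \<Longrightarrow> \<exists>u. init_seg u X \<and> card u = n"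
proof (induction n)
  case 0 then show ?case using iseg_empty by fastforce
next
  case (Suc n)
  then obtain u where u: "init_seg u X" "card u = n" by blast
  have fu: "finite u" using u iseg_finite by blast
  have "X - u \<noteq> {}" using Suc.prems fu finite_subset by auto
  then obtain y0 where y0: "y0 \<in> X - u" by blast
  define y where "y = (LEAST z. z \<in> X - u)"
  have y1: "y \<in> X - u" unfolding y_def using y0 by (rule LeastI)
  have y2: "\<forall>z\<in>X - u. y \<le> z" unfolding y_def by (auto intro: Least_le)
  note y = y1 y2
  have "init_seg (insert y u) X" unfolding iseg_iff
  proof (intro conjI ballI impI)
    show "finite (insert y u)" using fu by simp
    show "insert y u \<subseteq> X" using y u iseg_sub by blast
  next
    fix x z assume x: "x \<in> insert y u" and z: "z \<in> X" and zx: "z < x"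
    show "z \<in> insert y u"
    proof (cases "x = y")
      case True then show ?thesis using y z zx by (auto simp: not_le[symmetric])
    next
      case False then have "x \<in> u" using x by blast
      then show ?thesis using u z zx unfolding iseg_iff by blast
    qed
  qed
  moreover have "card (insert y u) = Suc n" using y fu u by simp
  ultimately show ?case by blast
qed

locale fus = ctx +
  fixes Xs :: "nat \<Rightarrow> nat set set" and T :: "nat set set"
  assumes nulls: "\<And>n. alpha_ramsey_null U a (Xs n)" and AT: "alpha_tree U a T"
begin

definition r where "r = stem T"

definition chs :: "nat \<Rightarrow> nat set set \<Rightarrow> nat set \<Rightarrow> nat set set" where
  "chs n B t = (SOME B'. alpha_tree U a B' \<and> B' \<subseteq> B \<and> stem B' = t \<and> branches B' \<inter> Xs n = {})"

lemma chs_spec: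
  assumes "alpha_tree U a B" "t \<in> tree_above B (stem B)"
  shows "alpha_tree U a (chs n B t) \<and> chs n B t \<subseteq> B \<and> stem (chs n B t) = t \<and> branches (chs n B t) \<inter> Xs n = {}"
  unfolding chs_def using someI_ex[OF null_choose[OF nulls assms]] .

primrec C :: "nat \<Rightarrow> nat set \<Rightarrow> nat set set" where
  "C 0 u = chs 0 T r"
| "C (Suc k) u = chs (Suc k) (C k (u - {Max u})) u"

definition ok where "ok v \<longleftrightarrow> v = r \<or> v \<in> C (card v - card r - 1) (v - {Max v})"
definition G where "G u \<longleftrightarrow> finite u \<and> init_seg r u \<and> (\<forall>v. init_seg r v \<longrightarrow> init_seg v u \<longrightarrow> ok v)"

lemma TT: "is_tree T" using AT unfolding alpha_tree_def by blast
lemma rT: "r \<in> T" using alpha_stem[OF AT] unfolding r_def is_stem_def by blast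
lemma fr: "finite r" using rT TT tree_fin by blast

lemma stem_in: "alpha_tree U a B \<Longrightarrow> stem B \<in> tree_above B (stem B)"
  using alpha_stem[of B] tree_fin[of B "stem B"] iseg_refl unfolding alpha_tree_def is_stem_def tree_above_def by blast

lemma C_props: "\<forall>u. G u \<longrightarrow> card u = card r + k \<longrightarrow>
   alpha_tree U a (C k u) \<and> stem (C k u) = u \<and> C k u \<subseteq> T \<and> branches (C k u) \<inter> Xs k = {} \<and>
   (\<forall>v. init_seg r v \<longrightarrow> init_seg v u \<longrightarrow> C k u \<subseteq> C (card v - card r) v)"
proof (induction k)
  case 0
  show ?case
  proof (intro allI impI)
    fix u assume G: "G u" and c: "card u = card r + 0"
    have ur: "u = r" using G c iseg_card_eq unfolding G_def by (metis add_0_right)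
    have "r \<in> tree_above T (stem T)" using stem_in[OF AT] unfolding r_def .
    note sp = chs_spec[OF AT this, of 0]
    have vr: "C (card v - card r) v = C 0 u" if "init_seg r v" "init_seg v u" for v
    proof -
      have "v = r" using that ur iseg_antisym by blast
      then show ?thesis by simp
    qed
    show "alpha_tree U a (C 0 u) \<and> stem (C 0 u) = u \<and> C 0 u \<subseteq> T \<and> branches (C 0 u) \<inter> Xs 0 = {} \<and>
     (\<forall>v. init_seg r v \<longrightarrow> init_seg v u \<longrightarrow> C 0 u \<subseteq> C (card v - card r) v)"
      using sp ur vr by auto
  qed
next
  case (Suc k)
  show ?case
  proof (intro allI impI)
    fix u assume G: "G u" and c: "card u = card r + Suc k"
    have fu: "finite u" and ru: "init_seg r u" using G unfolding G_def by auto
    have une: "u \<noteq> r" using c by auto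
    then have une2: "u \<noteq> {}" using ru iseg_sub by blast
    define w where "w = u - {Max u}"
    have rw: "init_seg r w" using iseg_remove_max[OF ru une[symmetric] fu] unfolding w_def .
    have fw: "finite w" using fu unfolding w_def by simp
    have cw: "card w = card r + k" using c fu une2 unfolding w_def by simp
    have wu: "init_seg w u" using iseg_max[OF fu une2, of w] iseg_refl[OF fw] unfolding w_def by blast
    have Gw: "G w" unfolding G_def using fw rw G wu iseg_trans unfolding G_def by blast
    note IH = Suc.IH[rule_format, OF Gw cw]
    have "ok u" using G ru fu iseg_refl unfolding G_def by blast
    then have "u \<in> C k w" using une c unfolding ok_def w_def by simp
    then have "u \<in> tree_above (C k w) (stem (C k w))" using IH wu unfolding tree_above_def by simp
    note sp = chs_spec[OF conjunct1[OF IH] this, of "Suc k"]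
    have CS: "C (Suc k) u = chs (Suc k) (C k w) u" unfolding w_def by simp
    have sub: "C (Suc k) u \<subseteq> C (card v - card r) v" if "init_seg r v" "init_seg v u" for v
    proof (cases "v = u")
      case True then show ?thesis using c by simp
    next
      case False then have "init_seg v w" using that(2) iseg_max[OF fu une2] unfolding w_def by blast
      then have "C k w \<subseteq> C (card v - card r) v" using IH that(1) by blast
      then show ?thesis using sp CS by blast
    qed
    show "alpha_tree U a (C (Suc k) u) \<and> stem (C (Suc k) u) = u \<and> C (Suc k) u \<subseteq> T \<and> branches (C (Suc k) u) \<inter> Xs (Suc k) = {} \<and>
     (\<forall>v. init_seg r v \<longrightarrow> init_seg v u \<longrightarrow> C (Suc k) u \<subseteq> C (card v - card r) v)"
      using sp CS IH sub by auto
  qed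
qed

lemma CP: assumes "G u" shows "alpha_tree U a (C (card u - card r) u)" "stem (C (card u - card r) u) = u"
  "C (card u - card r) u \<subseteq> T" "branches (C (card u - card r) u) \<inter> Xs (card u - card r) = {}"
  "\<And>v. init_seg r v \<Longrightarrow> init_seg v u \<Longrightarrow> C (card u - card r) u \<subseteq> C (card v - card r) v"
proof -
  have "card r \<le> card u" using assms iseg_card unfolding G_def by blast
  then have "card u = card r + (card u - card r)" by simp
  note X = C_props[rule_format, OF assms this]
  show "alpha_tree U a (C (card u - card r) u)" "stem (C (card u - card r) u) = u"
    "C (card u - card r) u \<subseteq> T" "branches (C (card u - card r) u) \<inter> Xs (card u - card r) = {}"
    "\<And>v. init_seg r v \<Longrightarrow> init_seg v u \<Longrightarrow> C (card u - card r) u \<subseteq> C (card v - card r) v"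
    using X by auto
qed

lemma G_in: "G u \<Longrightarrow> u \<in> C (card u - card r) u"
  using stem_in[OF CP(1)] CP(2) unfolding tree_above_def by auto

lemma G_succ:
  assumes G: "G u" and m: "\<forall>x\<in>u. x < m" and mem: "insert m u \<in> C (card u - card r) u"
  shows "G (insert m u)"
proof -
  have fu: "finite u" and ru: "init_seg r u" using G unfolding G_def by auto
  have mu: "m \<notin> u" using m by blast
  have cr: "card r \<le> card u" using ru fu iseg_card by blast
  have ui: "init_seg u (insert m u)" using succ_iseg[OF fu m] .
  have Mx: "Max (insert m u) = m" using m fu by (meson Max_insert2 less_imp_le)
  have e1: "card (insert m u) - card r - 1 = card u - card r" using mu fu cr by simp
  have e2: "insert m u - {Max (insert m u)} = u" using Mx mu by simp
  have okm: "ok (insert m u)" unfolding ok_def e1 e2 using mem by blast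
  show ?thesis unfolding G_def
  proof (intro conjI allI impI)
    show "finite (insert m u)" using fu by simp
    show "init_seg r (insert m u)" using ru ui iseg_trans by blast
    fix v assume rv: "init_seg r v" and vi: "init_seg v (insert m u)"
    have "v = insert m u \<or> init_seg v u" using vi iseg_insert[OF fu m] by blast
    then show "ok v"
    proof
      assume "v = insert m u" then show ?thesis using okm by simp
    next
      assume "init_seg v u" then show ?thesis using G rv unfolding G_def by blast
    qed
  qed
qed

end

context fus begin

definition S where "S = {u. init_seg u r} \<union> {u. G u}"

lemma Gr: "G r"
proof -
  have "ok v" if "init_seg r v" "init_seg v r" for v
  proof -
    have "v = r" using that iseg_antisym by blast
    then show ?thesis unfolding ok_def by simp
  qed
  then show ?thesis unfolding G_def using fr iseg_refl[OF fr] by blast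
qed

lemma S_G: "u \<in> S \<Longrightarrow> init_seg r u \<Longrightarrow> G u"
proof -
  assume u: "u \<in> S" and ru: "init_seg r u"
  show "G u"
  proof (cases "init_seg u r")
    case True then have "u = r" using ru iseg_antisym by blast
    then show ?thesis using Gr by simp
  next
    case False then show ?thesis using u unfolding S_def by blast
  qed
qed

lemma G_r: "G u \<Longrightarrow> init_seg r u" unfolding G_def by blast

lemma S_sub: "S \<subseteq> T"
proof
  fix u assume u: "u \<in> S"
  show "u \<in> T"
  proof (cases "init_seg u r")
    case True then show ?thesis using tree_closed[OF TT rT] by blast
  next
    case False then have "G u" using u unfolding S_def by blast
    then show ?thesis using G_in CP(3) by blast
  qed
qed

lemma S_tree: "is_tree S"
  unfolding is_tree_def
proof (intro conjI ballI allI impI)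
  have "r \<in> S" unfolding S_def using iseg_refl[OF fr] by blast
  then show "S \<noteq> {}" by blast
next
  fix t assume t: "t \<in> S"
  show "finite t"
  proof (cases "init_seg t r")
    case True then show ?thesis using iseg_finite by blast
  next
    case False then show ?thesis using t unfolding S_def G_def by blast
  qed
next
  fix t s assume t: "t \<in> S" and st: "init_seg s t"
  show "s \<in> S"
  proof (cases "init_seg t r")
    case True then show ?thesis using st iseg_trans unfolding S_def by blast
  next
    case False then have Gt: "G t" using t unfolding S_def by blast
    then have rt: "init_seg r t" by (rule G_r)
    have "init_seg s r \<or> init_seg r s" using iseg_comp[OF st rt] .
    then show ?thesis
    proof
      assume "init_seg s r" then show ?thesis unfolding S_def by blast
    next
      assume rs: "init_seg r s"
      have "G s" unfolding G_def
      proof (intro conjI allI impI)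
        show "finite s" using st iseg_finite by blast
        show "init_seg r s" by fact
        fix v assume "init_seg r v" "init_seg v s"
        then show "ok v" using Gt st iseg_trans unfolding G_def by blast
      qed
      then show ?thesis unfolding S_def by blast
    qed
  qed
qed

lemma S_comp: "\<forall>t\<in>S. comparable r t"
proof
  fix t assume t: "t \<in> S"
  show "comparable r t"
  proof (cases "init_seg t r")
    case True then show ?thesis unfolding comparable_def by blast
  next
    case False then have "G t" using t unfolding S_def by blast
    then show ?thesis using G_r unfolding comparable_def by blast
  qed
qed

lemma S_large: assumes Gu: "G u" shows "{i. insert (a u i) u \<in> S} \<in> U"
proof -
  let ?B = "C (card u - card r) u"
  have fu: "finite u" using Gu unfolding G_def by blast
  have "u \<in> tree_above ?B (stem ?B)" using stem_in[OF CP(1)[OF Gu]] CP(2)[OF Gu] by simp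
  then have "{i. insert (a u i) u \<in> ?B} \<in> U" using CP(1)[OF Gu] unfolding alpha_tree_def by blast
  then have L: "{i. insert (a u i) u \<in> ?B \<and> (\<forall>x\<in>u. x < a u i)} \<in> U" using large_gt fu by blast
  have "{i. insert (a u i) u \<in> ?B \<and> (\<forall>x\<in>u. x < a u i)} \<subseteq> {i. insert (a u i) u \<in> S}"
  proof
    fix i assume "i \<in> {i. insert (a u i) u \<in> ?B \<and> (\<forall>x\<in>u. x < a u i)}"
    then have "G (insert (a u i) u)" using G_succ[OF Gu] by blast
    then show "i \<in> {i. insert (a u i) u \<in> S}" unfolding S_def by blast
  qed
  then show ?thesis by (rule uf_mono[OF uf L])
qed

lemma S_stem: "is_stem S r"
proof -
  obtain m1 m2 where m: "m1 \<noteq> m2" "insert m1 r \<in> S" "insert m2 r \<in> S" "\<forall>x\<in>r. x < m1" "\<forall>x\<in>r. x < m2"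
    using two_succ[OF fr S_large[OF Gr]] by blast
  have rS: "r \<in> S" unfolding S_def using iseg_refl[OF fr] by blast
  show ?thesis using is_stem_intro[OF S_tree rS S_comp m] .
qed

lemma S_stem_eq: "stem S = r" using stem_unique[OF S_stem] .

lemma S_alpha: "alpha_tree U a S"
proof -
  have rS: "r \<in> S" unfolding S_def using iseg_refl[OF fr] by blast
  have ne: "tree_above S (stem S) \<noteq> {}" unfolding S_stem_eq tree_above_def using rS iseg_refl[OF fr] by blast
  have al: "\<forall>s\<in>tree_above S (stem S). {i. insert (a s i) s \<in> S} \<in> U"
  proof
    fix s assume "s \<in> tree_above S (stem S)"
    then have "s \<in> S" "init_seg r s" unfolding S_stem_eq tree_above_def by auto
    then show "{i. insert (a s i) s \<in> S} \<in> U" using S_G S_large by blast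
  qed
  have ex: "\<exists>s. is_stem S s" using S_stem by blast
  show ?thesis unfolding alpha_tree_def by (intro conjI S_tree ex ne al)
qed

lemma S_branch: assumes XB: "X \<in> branches S" shows "X \<notin> Xs n"
proof
  assume Xn: "X \<in> Xs n"
  have inf: "infinite X" and segs: "\<And>s. init_seg s X \<Longrightarrow> s \<in> S" using XB unfolding branches_def by auto
  obtain u where uX: "init_seg u X" and cu: "card u = card r + n" using iseg_exists[OF inf] by blast
  have uS: "u \<in> S" using segs uX by blast
  have ru: "init_seg r u"
  proof (cases "init_seg u r")
    case True
    then have "card u \<le> card r" using iseg_card fr by blast
    then have "card u = card r" using cu by simp
    then have "u = r" using iseg_card_eq True fr by blast
    then show ?thesis using iseg_refl[OF fr] by simp
  next
    case False then show ?thesis using uS unfolding S_def G_def by blast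
  qed
  have Gu: "G u" using S_G uS ru by blast
  have kn: "card u - card r = n" using cu by simp
  let ?B = "C (card u - card r) u"
  have TB: "is_tree ?B" using CP(1)[OF Gu] unfolding alpha_tree_def by blast
  have "X \<in> branches ?B" unfolding branches_def
  proof (intro CollectI conjI allI impI)
    show "infinite X" by fact
    fix s assume sX: "init_seg s X"
    have "init_seg s u \<or> init_seg u s" using iseg_comp[OF sX uX] .
    then show "s \<in> ?B"
    proof
      assume "init_seg s u" then show ?thesis using tree_closed[OF TB G_in[OF Gu]] by blast
    next
      assume us: "init_seg u s"
      have rs: "init_seg r s" using ru us iseg_trans by blast
      have Gs: "G s" using S_G segs[OF sX] rs by blast
      have "C (card s - card r) s \<subseteq> ?B" using CP(5)[OF Gs ru us] .
      then show ?thesis using G_in[OF Gs] by blast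
    qed
  qed
  then show False using CP(4)[OF Gu] Xn kn by blast
qed

end

context ctx begin

lemma union_null:
  fixes Xs :: "nat \<Rightarrow> nat set set"
  assumes nulls: "\<And>n. alpha_ramsey_null U a (Xs n)"
  shows "alpha_ramsey_null U a (\<Union>n. Xs n)"
  unfolding alpha_ramsey_null_def
proof (intro conjI ballI allI impI)
  fix X assume "X \<in> (\<Union>n. Xs n)"
  then show "infinite X" using nulls unfolding alpha_ramsey_null_def by blast
next
  fix T0 assume AT0: "alpha_tree U a T0"
  interpret F: fus U a Xs T0
    by (unfold_locales) (fact nulls, fact AT0)
  have "branches F.S \<inter> (\<Union>n. Xs n) = {}" using F.S_branch by blast
  then show "\<exists>S. alpha_tree U a S \<and> S \<subseteq> T0 \<and> stem S = stem T0 \<and> branches S \<inter> (\<Union>n. Xs n) = {}"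
    using F.S_alpha F.S_sub F.S_stem_eq unfolding F.r_def by blast
qed

end

theorem mainTheorem15:
  fixes U :: "nat set set" and a :: "nat set \<Rightarrow> nat \<Rightarrow> nat"
  assumes "ultrafilter_on_nat U" and "nonprincipal U"
    and "\<And>s. finite s \<Longrightarrow> nonstandard_rep U (a s)"
  shows "alpha_ramsey_null U a {}
    \<and> (\<forall>\<X> \<Y>. alpha_ramsey_null U a \<X> \<longrightarrow> \<Y> \<subseteq> \<X> \<longrightarrow> alpha_ramsey_null U a \<Y>)
    \<and> (\<forall>\<X> :: nat \<Rightarrow> nat set set. (\<forall>n. alpha_ramsey_null U a (\<X> n))
          \<longrightarrow> alpha_ramsey_null U a (\<Union>n. \<X> n))"
proof -
  interpret ctx U a using assms(1,3) by unfold_locales auto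
  have P1: "alpha_ramsey_null U a {}" unfolding alpha_ramsey_null_def by blast
  have P2: "\<forall>\<X> \<Y>. alpha_ramsey_null U a \<X> \<longrightarrow> \<Y> \<subseteq> \<X> \<longrightarrow> alpha_ramsey_null U a \<Y>"
  proof (intro allI impI)
    fix X Y assume N: "alpha_ramsey_null U a X" and YX: "Y \<subseteq> X"
    have i: "\<forall>x\<in>Y. infinite x" using N YX unfolding alpha_ramsey_null_def by blast
    have "\<forall>T. alpha_tree U a T \<longrightarrow> (\<exists>S. alpha_tree U a S \<and> S \<subseteq> T \<and> stem S = stem T \<and> branches S \<inter> Y = {})"
    proof (intro allI impI)
      fix T assume "alpha_tree U a T"
      then obtain S where "alpha_tree U a S" "S \<subseteq> T" "stem S = stem T" "branches S \<inter> X = {}"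
        using N unfolding alpha_ramsey_null_def by blast
      then show "\<exists>S. alpha_tree U a S \<and> S \<subseteq> T \<and> stem S = stem T \<and> branches S \<inter> Y = {}"
        using YX by blast
    qed
    then show "alpha_ramsey_null U a Y" unfolding alpha_ramsey_null_def using i by blast
  qed
  have P3: "\<forall>\<X> :: nat \<Rightarrow> nat set set. (\<forall>n. alpha_ramsey_null U a (\<X> n)) \<longrightarrow> alpha_ramsey_null U a (\<Union>n. \<X> n)"
    using union_null by blast
  show ?thesis using P1 P2 P3 by blast
qed


end
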